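(* A real number $\alpha$ has a primitive recursive nested interval representation if and only if it admits a primitive recursive approximation.
   Context: $\mathbb{N}=\{0,1,2,\dots\}$. $\mathfrak{PR}$ denotes the primitive recursive functions $\mathbb{N}^n\to\mathbb{N}$. A $\mathfrak{PR}$-sequence is a function $A:\mathbb{N}\to\mathbb{Q}$ of the form $A(x)=\frac{f(x)-g(x)}{h(x)+1}$ with $f,g,h:\mathbb{N}\to\mathbb{N}$ primitive recursive. A primitive recursive approximation of $\alpha$ is a pair $(A,E)$ of $\mathfrak{PR}$-sequences such that $E$ is monotonically decreasing to $0$ and $|A(x)-\alpha|\le E(x)$ for all $x$. A primitive recursive nested interval representation of $\alpha$ is a pair of $\mathfrak{PR}$-sequences $f,g:\mathbb{N}\to\mathbb{Q}$ with $f(x)\le f(x+1)\le\alpha\le g(x+1)\le g(x)$ for all $x$ and $\lim_{x\to\infty}(g(x)-f(x))=0$. *)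

theory Defs
  imports Complex_Main
begin

text \<open>Following the classic formulation of the primitive recursive functions
  as functions on argument lists; missing arguments default to 0.\<close>

definition hd0 :: "nat list \<Rightarrow> nat" where
  "hd0 l = (case l of [] \<Rightarrow> 0 | x # _ \<Rightarrow> x)"

definition SC :: "nat list \<Rightarrow> nat" where
  "SC l = Suc (hd0 l)"

definition CONSTANT :: "nat \<Rightarrow> nat list \<Rightarrow> nat" where
  "CONSTANT n l = n"

definition PROJ :: "nat \<Rightarrow> nat list \<Rightarrow> nat" where
  "PROJ i l = hd0 (drop i l)"

definition COMP :: "(nat list \<Rightarrow> nat) \<Rightarrow> (nat list \<Rightarrow> nat) list \<Rightarrow> nat list \<Rightarrow> nat" where
  "COMP g fs l = g (map (\<lambda>f. f l) fs)"

definition PREC :: "(nat list \<Rightarrow> nat) \<Rightarrow> (nat list \<Rightarrow> nat) \<Rightarrow> nat list \<Rightarrow> nat" where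
  "PREC f g l =
    (case l of
      [] \<Rightarrow> 0
    | x # l' \<Rightarrow> rec_nat (f l') (\<lambda>y r. g (r # y # l')) x)"

inductive PRIMREC :: "(nat list \<Rightarrow> nat) \<Rightarrow> bool" where
  SC: "PRIMREC SC"
| CONSTANT: "PRIMREC (CONSTANT k)"
| PROJ: "PRIMREC (PROJ i)"
| COMP: "PRIMREC g \<Longrightarrow> \<forall>f \<in> set fs. PRIMREC f \<Longrightarrow> PRIMREC (COMP g fs)"
| PREC: "PRIMREC f \<Longrightarrow> PRIMREC g \<Longrightarrow> PRIMREC (PREC f g)"

definition pr1 :: "(nat \<Rightarrow> nat) \<Rightarrow> bool" where
  "pr1 f \<longleftrightarrow> (\<exists>F. PRIMREC F \<and> (\<forall>x. F [x] = f x))"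

definition PR_seq :: "(nat \<Rightarrow> rat) \<Rightarrow> bool" where
  "PR_seq A \<longleftrightarrow> (\<exists>f g h. pr1 f \<and> pr1 g \<and> pr1 h \<and>
      (\<forall>x. A x = (of_nat (f x) - of_nat (g x)) / (of_nat (h x) + 1)))"

definition pr_approximation :: "(nat \<Rightarrow> rat) \<Rightarrow> (nat \<Rightarrow> rat) \<Rightarrow> real \<Rightarrow> bool" where
  "pr_approximation A E \<alpha> \<longleftrightarrow> PR_seq A \<and> PR_seq E \<and> decseq E \<and>
      (\<lambda>x. real_of_rat (E x)) \<longlonglongrightarrow> 0 \<and>
      (\<forall>x. \<bar>real_of_rat (A x) - \<alpha>\<bar> \<le> real_of_rat (E x))"

definition pr_nested_interval :: "(nat \<Rightarrow> rat) \<Rightarrow> (nat \<Rightarrow> rat) \<Rightarrow> real \<Rightarrow> bool" where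
  "pr_nested_interval f g \<alpha> \<longleftrightarrow> PR_seq f \<and> PR_seq g \<and>
      (\<forall>x. f x \<le> f (x+1) \<and> real_of_rat (f (x+1)) \<le> \<alpha> \<and>
           \<alpha> \<le> real_of_rat (g (x+1)) \<and> g (x+1) \<le> g x) \<and>
      (\<lambda>x. real_of_rat (g x - f x)) \<longlonglongrightarrow> 0"

end

theory Submission imports Defs begin

lemma pr_ext: "PRIMREC F \<Longrightarrow> (\<And>l. F l = G l) \<Longrightarrow> PRIMREC G"
proof -
  assume "PRIMREC F" "\<And>l. F l = G l"
  then have "F = G" by auto
  with \<open>PRIMREC F\<close> show ?thesis by simp
qed

lemma pr_const: "PRIMREC (\<lambda>l. k)"
  using PRIMREC.CONSTANT[of k] by (rule pr_ext) (simp add: CONSTANT_def)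

lemma pr_proj: "PRIMREC (\<lambda>l. hd0 (drop i l))"
  using PRIMREC.PROJ[of i] by (rule pr_ext) (simp add: PROJ_def)

lemma pr_hd: "PRIMREC (\<lambda>l. hd0 l)"
  using pr_proj[of 0] by simp

lemma pr_app1: "PRIMREC F \<Longrightarrow> PRIMREC G \<Longrightarrow> PRIMREC (\<lambda>l. F [G l])"
  by (rule pr_ext[OF PRIMREC.COMP[of F "[G]"]]) (auto simp: COMP_def)

lemma pr_suc: "PRIMREC G \<Longrightarrow> PRIMREC (\<lambda>l. Suc (G l))"
  by (rule pr_ext[OF pr_app1[OF PRIMREC.SC]]) (auto simp: SC_def hd0_def)

lemma pr_bin: "PRIMREC B \<Longrightarrow> (\<And>a b. B [a,b] = h a b) \<Longrightarrow> PRIMREC F \<Longrightarrow> PRIMREC G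
  \<Longrightarrow> PRIMREC (\<lambda>l. h (F l) (G l))"
  by (rule pr_ext[OF PRIMREC.COMP[of B "[F,G]"]]) (auto simp: COMP_def)

definition "plusF = PREC (PROJ 0) (COMP SC [PROJ 0])"
definition "multF = PREC (CONSTANT 0) (COMP plusF [PROJ 0, PROJ 2])"
definition "predF = PREC (CONSTANT 0) (PROJ 1)"
definition "monusF = PREC (PROJ 0) (COMP predF [PROJ 0])"
definition "subF = COMP monusF [PROJ 1, PROJ 0]"

lemma plusF: "PRIMREC plusF" "plusF [a,b] = a + b"
  unfolding plusF_def
  by (auto intro!: PRIMREC.intros simp: PREC_def COMP_def PROJ_def SC_def hd0_def, induct a, auto)

lemma multF: "PRIMREC multF" "multF [a,b] = a * b"
  unfolding multF_def
  by (auto intro!: PRIMREC.intros plusF simp: PREC_def COMP_def PROJ_def CONSTANT_def hd0_def plusF, induct a, auto simp: plusF)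

lemma predF: "PRIMREC predF" "predF [a] = a - 1"
  unfolding predF_def
  by (auto intro!: PRIMREC.intros simp: PREC_def PROJ_def CONSTANT_def hd0_def, cases a, auto)

lemma monusF: "PRIMREC monusF" "monusF [b,a] = a - b"
  unfolding monusF_def
  by (auto intro!: PRIMREC.intros predF simp: PREC_def COMP_def PROJ_def hd0_def, induct b, auto simp: predF)

lemma subF: "PRIMREC subF" "subF [a,b] = a - b"
  unfolding subF_def
  by (auto intro!: PRIMREC.intros monusF simp: COMP_def PROJ_def hd0_def monusF)

lemma pr_add: "PRIMREC F \<Longrightarrow> PRIMREC G \<Longrightarrow> PRIMREC (\<lambda>l. F l + G l)"
  by (rule pr_bin[OF plusF(1)]) (simp_all add: plusF)
lemma pr_mult: "PRIMREC F \<Longrightarrow> PRIMREC G \<Longrightarrow> PRIMREC (\<lambda>l. F l * G l)"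
  by (rule pr_bin[OF multF(1)]) (simp_all add: multF)
lemma pr_sub: "PRIMREC F \<Longrightarrow> PRIMREC G \<Longrightarrow> PRIMREC (\<lambda>l. F l - G l)"
  by (rule pr_bin[OF subF(1)]) (simp_all add: subF)

lemma pr_if: "PRIMREC F \<Longrightarrow> PRIMREC G \<Longrightarrow> PRIMREC H \<Longrightarrow> PRIMREC K \<Longrightarrow>
  PRIMREC (\<lambda>l. if F l \<le> G l then H l else K l)"
proof -
  assume a: "PRIMREC F" "PRIMREC G" "PRIMREC H" "PRIMREC K"
  have "PRIMREC (\<lambda>l. H l * (1 - (F l - G l)) + K l * (1 - (1 - (F l - G l))))"
    by (intro pr_add pr_mult pr_sub pr_const a)
  then show ?thesis by (rule pr_ext) auto
qed

lemma pr_rec: "PRIMREC G \<Longrightarrow> \<exists>M. PRIMREC M \<and> (\<forall>x. M [x] = rec_nat 0 (\<lambda>y r. G [r,y]) x)"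
  by (rule exI[of _ "PREC (CONSTANT 0) G"]) (auto intro: PRIMREC.intros simp: PREC_def CONSTANT_def)

lemma pr1I: "PRIMREC (\<lambda>l. h (hd0 l)) \<Longrightarrow> pr1 h"
  unfolding pr1_def by (rule exI[of _ "\<lambda>l. h (hd0 l)"]) (simp add: hd0_def)

lemma pr_app: "pr1 f \<Longrightarrow> PRIMREC G \<Longrightarrow> PRIMREC (\<lambda>l. f (G l))"
proof -
  assume "pr1 f" "PRIMREC G"
  then obtain F where "PRIMREC F" "\<forall>x. F [x] = f x" unfolding pr1_def by auto
  then show ?thesis using pr_app1[OF \<open>PRIMREC F\<close> \<open>PRIMREC G\<close>] by (rule_tac pr_ext) auto
qed



lemma pr_app_hd: "pr1 f \<Longrightarrow> PRIMREC (\<lambda>l. f (hd0 l))"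
  using pr_app[OF _ pr_hd] by simp

lemma pr_app_s1: "pr1 f \<Longrightarrow> PRIMREC (\<lambda>l. f (Suc (hd0 (drop 1 l))))"
  using pr_app[OF _ pr_suc[OF pr_proj[of 1]]] by simp

lemma pr1_comp: "pr1 f \<Longrightarrow> pr1 m \<Longrightarrow> pr1 (\<lambda>x. f (m x))"
  by (rule pr1I, rule pr_app[OF _ pr_app_hd])

definition "repr s s1 s2 s3 \<longleftrightarrow> pr1 s1 \<and> pr1 s2 \<and> pr1 s3 \<and>
   (\<forall>x. s x = (of_nat (s1 x) - of_nat (s2 x)) / (of_nat (s3 x) + 1))"

lemma PR_seq_repr: "PR_seq s \<longleftrightarrow> (\<exists>s1 s2 s3. repr s s1 s2 s3)"
  unfolding PR_seq_def repr_def by blast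

lemma PR_seq_diff:
  assumes "PR_seq p" "PR_seq q" shows "PR_seq (\<lambda>x. p x - q x)"
proof -
  from assms obtain p1 p2 p3 q1 q2 q3 where p: "repr p p1 p2 p3" and q: "repr q q1 q2 q3"
    unfolding PR_seq_repr by blast
  show ?thesis unfolding PR_seq_def
  proof (intro exI conjI allI)
    show "pr1 (\<lambda>x. p1 x * (q3 x + 1) + q2 x * (p3 x + 1))"
      using p q unfolding repr_def by - (rule pr1I, intro pr_add pr_mult pr_const pr_app_hd, auto)
    show "pr1 (\<lambda>x. p2 x * (q3 x + 1) + q1 x * (p3 x + 1))"
      using p q unfolding repr_def by - (rule pr1I, intro pr_add pr_mult pr_const pr_app_hd, auto)
    show "pr1 (\<lambda>x. p3 x * q3 x + p3 x + q3 x)"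
      using p q unfolding repr_def by - (rule pr1I, intro pr_add pr_mult pr_const pr_app_hd, auto)
    fix x
    have d1: "(of_nat (p3 x) + 1 :: rat) \<noteq> 0" "(of_nat (q3 x) + 1 :: rat) \<noteq> 0" by (simp_all add: add_eq_0_iff)
    have ep: "p x = (of_nat (p1 x) - of_nat (p2 x)) / (of_nat (p3 x) + 1)"
      using p unfolding repr_def by blast
    have eq: "q x = (of_nat (q1 x) - of_nat (q2 x)) / (of_nat (q3 x) + 1)"
      using q unfolding repr_def by blast
    have d2: "(of_nat (p3 x * q3 x + p3 x + q3 x) + 1 :: rat) = (of_nat (p3 x) + 1) * (of_nat (q3 x) + 1)"
      by (simp add: algebra_simps)
    show "p x - q x = (of_nat (p1 x * (q3 x + 1) + q2 x * (p3 x + 1)) - of_nat (p2 x * (q3 x + 1) + q1 x * (p3 x + 1))) /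
          (of_nat (p3 x * q3 x + p3 x + q3 x) + 1)"
      using d1 unfolding d2 ep eq by (simp add: field_simps)
  qed
qed

lemma PR_seq_neg: "PR_seq p \<Longrightarrow> PR_seq (\<lambda>x. - p x)"
  unfolding PR_seq_def
  by (metis (no_types, lifting) minus_diff_eq minus_divide_left)

lemma PR_seq_add: "PR_seq p \<Longrightarrow> PR_seq q \<Longrightarrow> PR_seq (\<lambda>x. p x + q x)"
  using PR_seq_diff[of p "\<lambda>x. - q x"] PR_seq_neg[of q] by simp

lemma PR_seq_comp: "PR_seq p \<Longrightarrow> pr1 m \<Longrightarrow> PR_seq (\<lambda>x. p (m x))"
  unfolding PR_seq_def by (metis pr1_comp)

lemma le_code:
  fixes a b c d e k :: nat
  shows "((of_nat a - of_nat b) / (of_nat c + 1) \<le> ((of_nat d - of_nat e) / (of_nat k + 1) :: rat))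
    \<longleftrightarrow> a * (k+1) + e * (c+1) \<le> d * (c+1) + b * (k+1)"
proof -
  have "((of_nat a - of_nat b) / (of_nat c + 1) \<le> ((of_nat d - of_nat e) / (of_nat k + 1) :: rat))
     \<longleftrightarrow> (of_nat a - of_nat b) * (of_nat k + 1) \<le> (of_nat d - of_nat e) * (of_nat c + (1::rat))"
    by (simp add: divide_le_eq le_divide_eq add_pos_nonneg field_simps)
  also have "\<dots> \<longleftrightarrow> of_nat (a * (k+1) + e * (c+1)) \<le> (of_nat (d * (c+1) + b * (k+1)) :: rat)"
    by (simp add: algebra_simps)
  also have "\<dots> \<longleftrightarrow> a * (k+1) + e * (c+1) \<le> d * (c+1) + b * (k+1)"
    by (rule of_nat_le_iff)
  finally show ?thesis .
qed

lemma argmax: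
  assumes "PR_seq s"
  shows "\<exists>m. pr1 m \<and> (\<forall>x. m x \<le> x) \<and> (\<forall>x y. y \<le> x \<longrightarrow> s y \<le> s (m x))"
proof -
  from assms obtain s1 s2 s3 where r: "repr s s1 s2 s3" unfolding PR_seq_repr by blast
  let ?C = "\<lambda>u v. s1 u * (s3 v + 1) + s2 v * (s3 u + 1) \<le> s1 v * (s3 u + 1) + s2 u * (s3 v + 1)"
  have C: "\<And>u v. ?C u v \<longleftrightarrow> s u \<le> s v" using r unfolding repr_def by (simp add: le_code)
  let ?G = "\<lambda>l. if s1 (Suc (hd0 (drop 1 l))) * (s3 (hd0 l) + 1) + s2 (hd0 l) * (s3 (Suc (hd0 (drop 1 l))) + 1)
       \<le> s1 (hd0 l) * (s3 (Suc (hd0 (drop 1 l))) + 1) + s2 (Suc (hd0 (drop 1 l))) * (s3 (hd0 l) + 1)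
       then hd0 l else Suc (hd0 (drop 1 l))"
  have "PRIMREC ?G" using r unfolding repr_def by (intro pr_add pr_mult pr_if pr_const pr_hd pr_proj pr_suc pr_app_hd pr_app_s1) auto
  from pr_rec[OF this] obtain M where M: "PRIMREC M" "\<forall>x. M [x] = rec_nat 0 (\<lambda>y r. ?G [r,y]) x" by blast
  define m where "m = rec_nat 0 (\<lambda>y r. ?G [r,y])"
  have m0: "m 0 = 0" and mS: "\<And>y. m (Suc y) = (if s (Suc y) \<le> s (m y) then m y else Suc y)"
    unfolding m_def by (simp_all add: hd0_def C[symmetric])
  have "pr1 m" unfolding pr1_def using M m_def by auto
  moreover have "\<forall>x. m x \<le> x"
  proof
    fix x show "m x \<le> x" by (induct x) (auto simp: m0 mS)
  qed
  moreover have "\<forall>x y. y \<le> x \<longrightarrow> s y \<le> s (m x)"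
  proof (rule allI)
    fix x show "\<forall>y. y \<le> x \<longrightarrow> s y \<le> s (m x)"
    proof (induct x)
      case 0 then show ?case by (simp add: m0)
    next
      case (Suc x)
      show ?case
      proof (intro allI impI)
        fix y assume "y \<le> Suc x"
        then consider "y = Suc x" | "y \<le> x" by linarith
        then show "s y \<le> s (m (Suc x))"
        proof cases
          case 1 then show ?thesis by (auto simp: mS)
        next
          case 2 then have "s y \<le> s (m x)" using Suc by blast
          then show ?thesis by (auto simp: mS)
        qed
      qed
    qed
  qed
  ultimately show ?thesis by blast
qed


lemma dir1:
  assumes "pr_nested_interval f g \<alpha>"
  shows "pr_approximation f (\<lambda>x. g x - f x) \<alpha>"
proof -
  have pf: "PR_seq f" and pg: "PR_seq g"
    and mono: "\<And>x. f x \<le> f (x+1) \<and> real_of_rat (f (x+1)) \<le> \<alpha> \<and> \<alpha> \<le> real_of_rat (g (x+1)) \<and> g (x+1) \<le> g x"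
    and lim: "(\<lambda>x. real_of_rat (g x - f x)) \<longlonglongrightarrow> 0"
    using assms unfolding pr_nested_interval_def by auto
  have lo: "real_of_rat (f x) \<le> \<alpha>" for x
  proof (cases x)
    case 0
    have "real_of_rat (f 0) \<le> real_of_rat (f 1)" using mono[of 0] by (simp add: of_rat_less_eq)
    then show ?thesis using mono[of 0] 0 by simp
  next
    case (Suc y) then show ?thesis using mono[of y] by simp
  qed
  have hi: "\<alpha> \<le> real_of_rat (g x)" for x
  proof (cases x)
    case 0
    have "real_of_rat (g 1) \<le> real_of_rat (g 0)" using mono[of 0] by (simp add: of_rat_less_eq)
    then show ?thesis using mono[of 0] 0 by simp
  next
    case (Suc y) then show ?thesis using mono[of y] by simp
  qed
  show ?thesis unfolding pr_approximation_def
  proof (intro conjI allI)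
    show "PR_seq f" by fact
    show "PR_seq (\<lambda>x. g x - f x)" using PR_seq_diff[OF pg pf] .
    show "decseq (\<lambda>x. g x - f x)"
    proof (rule decseq_SucI)
      fix n show "g (Suc n) - f (Suc n) \<le> g n - f n" using mono[of n] by simp
    qed
    show "(\<lambda>x. real_of_rat (g x - f x)) \<longlonglongrightarrow> 0" by fact
    fix x show "\<bar>real_of_rat (f x) - \<alpha>\<bar> \<le> real_of_rat (g x - f x)"
      using lo[of x] hi[of x] by (simp add: of_rat_diff)
  qed
qed

lemma dir2:
  assumes "pr_approximation A E \<alpha>"
  shows "\<exists>f g. pr_nested_interval f g \<alpha>"
proof -
  have pA: "PR_seq A" and pE: "PR_seq E" and lim: "(\<lambda>x. real_of_rat (E x)) \<longlonglongrightarrow> 0"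
    and bd: "\<And>x. \<bar>real_of_rat (A x) - \<alpha>\<bar> \<le> real_of_rat (E x)"
    using assms unfolding pr_approximation_def by auto
  define s where "s = (\<lambda>x. A x - E x)"
  define t where "t = (\<lambda>x. A x + E x)"
  have ps: "PR_seq s" unfolding s_def by (rule PR_seq_diff[OF pA pE])
  have pt: "PR_seq (\<lambda>x. - t x)" unfolding t_def by (rule PR_seq_neg[OF PR_seq_add[OF pA pE]])
  have slo: "real_of_rat (s x) \<le> \<alpha>" for x using bd[of x] by (simp add: s_def of_rat_diff)
  have thi: "\<alpha> \<le> real_of_rat (t x)" for x using bd[of x] by (simp add: t_def of_rat_add)
  obtain m where m: "pr1 m" "\<And>x. m x \<le> x" "\<And>x y. y \<le> x \<Longrightarrow> s y \<le> s (m x)"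
    using argmax[OF ps] by blast
  obtain m' where m': "pr1 m'" "\<And>x. m' x \<le> x" "\<And>x y. y \<le> x \<Longrightarrow> - t y \<le> - t (m' x)"
    using argmax[OF pt] by blast
  define f where "f = (\<lambda>x. s (m x))"
  define g where "g = (\<lambda>x. t (m' x))"
  have "pr_nested_interval f g \<alpha>" unfolding pr_nested_interval_def
  proof (intro conjI allI)
    show "PR_seq f" unfolding f_def by (rule PR_seq_comp[OF ps m(1)])
    show "PR_seq g" unfolding g_def using PR_seq_comp[OF PR_seq_neg[OF pt] m'(1)] by simp
    fix x
    show "f x \<le> f (x+1)" unfolding f_def using m(2)[of x] by (intro m(3)) simp
    show "real_of_rat (f (x+1)) \<le> \<alpha>" unfolding f_def by (rule slo)
    show "\<alpha> \<le> real_of_rat (g (x+1))" unfolding g_def by (rule thi)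
    show "g (x+1) \<le> g x" unfolding g_def using m'(3)[of "m' x" "x+1"] m'(2)[of x] by simp
  next
    have "(\<lambda>x. 2 * real_of_rat (E x)) \<longlonglongrightarrow> 2 * 0" by (intro tendsto_mult tendsto_const lim)
    then have l2: "(\<lambda>x. 2 * real_of_rat (E x)) \<longlonglongrightarrow> 0" by simp
    show "(\<lambda>x. real_of_rat (g x - f x)) \<longlonglongrightarrow> 0"
    proof (rule tendsto_sandwich[OF _ _ tendsto_const l2])
      show "\<forall>\<^sub>F x in sequentially. 0 \<le> real_of_rat (g x - f x)"
      proof (rule always_eventually, rule allI)
        fix x show "0 \<le> real_of_rat (g x - f x)"
          using slo[of "m x"] thi[of "m' x"] by (simp add: f_def g_def of_rat_diff)
      qed
      show "\<forall>\<^sub>F x in sequentially. real_of_rat (g x - f x) \<le> 2 * real_of_rat (E x)"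
      proof (rule always_eventually, rule allI)
        fix x
        have "s x \<le> f x" unfolding f_def by (rule m(3)) simp
        moreover have "g x \<le> t x" unfolding g_def using m'(3)[of x x] by simp
        ultimately have "g x - f x \<le> 2 * E x" by (simp add: s_def t_def)
        then have "real_of_rat (g x - f x) \<le> real_of_rat (2 * E x)" by (simp add: of_rat_less_eq)
        then show "real_of_rat (g x - f x) \<le> 2 * real_of_rat (E x)" by (simp add: of_rat_mult)
      qed
    qed
  qed
  then show ?thesis by blast
qed

theorem mainTheorem19:
  fixes \<alpha> :: real
  shows "(\<exists>f g. pr_nested_interval f g \<alpha>) \<longleftrightarrow> (\<exists>A E. pr_approximation A E \<alpha>)"
  using dir1 dir2 by blast

end
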